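(* Let $Y$ be a finite totally ordered set, $P=(T_1,T_2)$ a confluent pair of reduction operators relatively to $Y$, and $k$ an integer with $\langle T_1,T_2\rangle^k=\langle T_2,T_1\rangle^k$. Let $W$ be a subspace of $\mathbb{K}Y$ and $\{i,j\}=\{1,2\}$. If $W\subset\ker(T_i)$, then $\varphi^P(\gamma_j)|_W=(T_1\vee T_2)|_W$.
   Context: For $0\neq v\in\mathbb{K}Y$, $\mathrm{lm}(v)$ is the greatest element of $Y$ in the support of $v$; write $v<w$ if $v=0$ or $\mathrm{lm}(v)<\mathrm{lm}(w)$. A reduction operator relatively to $Y$ is a linear projector $T$ of $\mathbb{K}Y$ with $T(y)=y$ or $T(y)<y$ for each $y\in Y$. For every subspace $U$ of $\mathbb{K}Y$ there is a unique reduction operator with kernel $U$, denoted $\theta_Y^{-1}(U)$; $T_1\vee T_2=\theta_Y^{-1}(\ker T_1\cap\ker T_2)$. For endomorphisms $s,t$, $\langle t,s\rangle^k$ denotes $\cdots sts$ with $k$ factors (rightmost $s$); $(T_1,T_2)$ is confluent if $\langle T_1,T_2\rangle^k=\langle T_2,T_1\rangle^k$ for some $k$. The confluence algebra $\mathcal{A}_k$ is generated by $s_1,s_2$ with relations $s_1^2=s_1$, $s_2^2=s_2$, $\langle s_1,s_2\rangle^k=\langle s_2,s_1\rangle^k$; in it $\gamma_1=(1-s_2)\sum_{i\in I}\langle s_2,s_1\rangle^i$ and $\gamma_2=(1-s_1)\sum_{i\in I}\langle s_1,s_2\rangle^i$, where $I$ is the set of odd integers between $1$ and $k-1$. $\varphi^P:\mathcal{A}_k\to\mathrm{End}(\mathbb{K}Y)$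 is the algebra morphism $s_1\mapsto T_1$, $s_2\mapsto T_2$. *)

theory Defs
  imports Main "HOL-Library.Function_Algebras"
begin

text \<open>The vector space KY with Y a finite totally ordered set (a finite linorder type 'y)
  is represented as the functions 'y => 'k (coordinates in the basis Y), 'k a field.\<close>

definition basisv :: "'y \<Rightarrow> ('y \<Rightarrow> 'k::field)" where
  "basisv y = (\<lambda>z. if z = y then 1 else 0)"

definition supp :: "('y \<Rightarrow> 'k::field) \<Rightarrow> 'y set" where
  "supp v = {y. v y \<noteq> 0}"

definition lm :: "('y::{finite,linorder} \<Rightarrow> 'k::field) \<Rightarrow> 'y" where
  "lm v = Max (supp v)"

definition vless :: "('y::{finite,linorder} \<Rightarrow> 'k::field) \<Rightarrow> ('y \<Rightarrow> 'k) \<Rightarrow> bool" where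
  "vless v w \<longleftrightarrow> v = 0 \<or> (v \<noteq> 0 \<and> w \<noteq> 0 \<and> lm v < lm w)"

definition is_linear :: "(('y \<Rightarrow> 'k::field) \<Rightarrow> ('y \<Rightarrow> 'k)) \<Rightarrow> bool" where
  "is_linear T \<longleftrightarrow> (\<forall>v w. T (v + w) = T v + T w) \<and> (\<forall>c v. T (\<lambda>y. c * v y) = (\<lambda>y. c * T v y))"

definition is_subspace :: "('y \<Rightarrow> 'k::field) set \<Rightarrow> bool" where
  "is_subspace W \<longleftrightarrow> 0 \<in> W \<and> (\<forall>v\<in>W. \<forall>w\<in>W. v + w \<in> W) \<and> (\<forall>c. \<forall>v\<in>W. (\<lambda>y. c * v y) \<in> W)"

definition kern :: "(('y \<Rightarrow> 'k::field) \<Rightarrow> ('y \<Rightarrow> 'k)) \<Rightarrow> ('y \<Rightarrow> 'k) set" where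
  "kern T = {v. T v = 0}"

definition reduction_operator :: "(('y::{finite,linorder} \<Rightarrow> 'k::field) \<Rightarrow> ('y \<Rightarrow> 'k)) \<Rightarrow> bool" where
  "reduction_operator T \<longleftrightarrow> is_linear T \<and> T \<circ> T = T \<and>
     (\<forall>y. T (basisv y) = basisv y \<or> vless (T (basisv y)) (basisv y))"

definition theta_inv :: "('y::{finite,linorder} \<Rightarrow> 'k::field) set \<Rightarrow> (('y \<Rightarrow> 'k) \<Rightarrow> ('y \<Rightarrow> 'k))" where
  "theta_inv U = (THE T. reduction_operator T \<and> kern T = U)"

definition join :: "(('y::{finite,linorder} \<Rightarrow> 'k::field) \<Rightarrow> ('y \<Rightarrow> 'k)) \<Rightarrow> (('y \<Rightarrow> 'k) \<Rightarrow> ('y \<Rightarrow> 'k)) \<Rightarrow> (('y \<Rightarrow> 'k) \<Rightarrow> ('y \<Rightarrow> 'k))" where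
  "join T1 T2 = theta_inv (kern T1 \<inter> kern T2)"

text \<open>alt t s n = <t,s>^n = ... s t s with n factors, rightmost s (n = 0: identity).\<close>
fun alt :: "('a \<Rightarrow> 'a) \<Rightarrow> ('a \<Rightarrow> 'a) \<Rightarrow> nat \<Rightarrow> ('a \<Rightarrow> 'a)" where
  "alt t s 0 = id"
| "alt t s (Suc n) = alt s t n \<circ> s"

definition confluent :: "('a \<Rightarrow> 'a) \<Rightarrow> ('a \<Rightarrow> 'a) \<Rightarrow> bool" where
  "confluent T1 T2 \<longleftrightarrow> (\<exists>k. alt T1 T2 k = alt T2 T1 k)"

definition oddI :: "nat \<Rightarrow> nat set" where
  "oddI k = {n. odd n \<and> 1 \<le> n \<and> n + 1 \<le> k}"

text \<open>Image under phi^P (s1 -> T1, s2 -> T2) of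
  gamma_1 = (1 - s2) sum_{i in I} <s2,s1>^i and gamma_2 = (1 - s1) sum_{i in I} <s1,s2>^i.\<close>
definition gamma_img :: "(('y \<Rightarrow> 'k::field) \<Rightarrow> ('y \<Rightarrow> 'k)) \<Rightarrow> (('y \<Rightarrow> 'k) \<Rightarrow> ('y \<Rightarrow> 'k)) \<Rightarrow> nat \<Rightarrow> nat \<Rightarrow> (('y \<Rightarrow> 'k) \<Rightarrow> ('y \<Rightarrow> 'k))" where
  "gamma_img T1 T2 k j =
     (if j = 1 then (\<lambda>v. let u = (\<Sum>i\<in>oddI k. alt T2 T1 i v) in u - T2 u)
      else (\<lambda>v. let u = (\<Sum>i\<in>oddI k. alt T1 T2 i v) in u - T1 u))"

end

theory Submission
  imports Defs
begin

lemma sum_fun_apply: "finite A \<Longrightarrow> (sum f A) x = sum (\<lambda>a. f a x) A"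
  by (induction A rule: finite_induct) auto

lemma lin_add: "is_linear T \<Longrightarrow> T (v + w) = T v + T w"
  unfolding is_linear_def by blast

lemma lin_smult: "is_linear T \<Longrightarrow> T (\<lambda>y. c * v y) = (\<lambda>y. c * T v y)"
  unfolding is_linear_def by blast

lemma lin_zero: "is_linear T \<Longrightarrow> T 0 = 0"
  using lin_add[of T 0 0] by simp

lemma lin_diff: "is_linear T \<Longrightarrow> T (v - w) = T v - T w"
  using lin_add[of T "v - w" w] by (simp add: algebra_simps)

lemma lin_sum: "is_linear T \<Longrightarrow> T (sum f A) = sum (\<lambda>i. T (f i)) A"
  by (induction A rule: infinite_finite_induct) (auto simp: lin_zero lin_add)

lemma expand: "(x::'y::finite \<Rightarrow> 'k::field) = (\<Sum>y\<in>UNIV. (\<lambda>z. x y * basisv y z))"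
proof (rule ext)
  fix z
  have "(\<Sum>a\<in>UNIV. x a * basisv a z) = (\<Sum>a\<in>UNIV. if z = a then x a else 0)"
    by (rule sum.cong) (auto simp: basisv_def)
  thus "x z = (\<Sum>y\<in>UNIV. (\<lambda>z. x y * basisv y z)) z" by (simp add: sum_fun_apply)
qed

lemma lin_expand:
  assumes "is_linear T"
  shows "T (x::'y::finite \<Rightarrow> 'k::field) z = (\<Sum>y\<in>UNIV. x y * T (basisv y) z)"
proof -
  have "T x = T (\<Sum>y\<in>UNIV. (\<lambda>z. x y * basisv y z))" using expand[of x] by simp
  also have "\<dots> = (\<Sum>y\<in>UNIV. T (\<lambda>z. x y * basisv y z))" by (rule lin_sum[OF assms])
  also have "\<dots> = (\<Sum>y\<in>UNIV. (\<lambda>z. x y * T (basisv y) z))" using lin_smult[OF assms] by simp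
  finally show ?thesis by (simp add: sum_fun_apply)
qed

lemma lm_in_supp: "(v::'y::{finite,linorder} \<Rightarrow> 'k::field) \<noteq> 0 \<Longrightarrow> lm v \<in> supp v"
  unfolding lm_def supp_def by (rule Max_in) (auto simp: fun_eq_iff)

lemma le_lm: "z \<in> supp (v::'y::{finite,linorder} \<Rightarrow> 'k::field) \<Longrightarrow> z \<le> lm v"
  unfolding lm_def by (rule Max_ge) auto

lemma supp_basisv: "supp (basisv y :: 'y \<Rightarrow> 'k::field) = {y}"
  unfolding supp_def basisv_def by auto

lemma basisv_nz: "(basisv y :: 'y \<Rightarrow> 'k::field) \<noteq> 0"
  unfolding basisv_def by (auto simp: fun_eq_iff)

lemma lm_basisv: "lm (basisv y :: 'y::{finite,linorder} \<Rightarrow> 'k::field) = y"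
  unfolding lm_def supp_basisv by simp

definition nf :: "(('y::{finite,linorder} \<Rightarrow> 'k::field) \<Rightarrow> ('y \<Rightarrow> 'k)) \<Rightarrow> 'y set" where
  "nf T = {y. T (basisv y) = basisv y}"

lemma red_basis:
  assumes "reduction_operator T" and "T (basisv y) z \<noteq> 0"
  shows "(y \<in> nf T \<and> z = y) \<or> (y \<notin> nf T \<and> z < y)"
proof (cases "y \<in> nf T")
  case True
  then show ?thesis using assms(2) by (auto simp: nf_def basisv_def split: if_splits)
next
  case False
  hence "vless (T (basisv y)) (basisv y)" using assms(1) unfolding reduction_operator_def nf_def by auto
  moreover have "T (basisv y) \<noteq> 0" using assms(2) by auto
  ultimately have "lm (T (basisv y)) < y" unfolding vless_def lm_basisv by auto
  moreover have "z \<le> lm (T (basisv y))" using assms(2) by (intro le_lm) (simp add: supp_def)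
  ultimately show ?thesis using False by auto
qed

lemma red_lin: "reduction_operator T \<Longrightarrow> is_linear T"
  unfolding reduction_operator_def by blast

lemma red_idem: "reduction_operator T \<Longrightarrow> T (T x) = T x"
  unfolding reduction_operator_def by (metis comp_apply)


lemma red_kernel_lm:
  assumes R: "reduction_operator T" and z0: "T z = 0" and nz: "z \<noteq> 0"
  shows "lm z \<notin> nf T"
proof
  assume inn: "lm z \<in> nf T"
  let ?y0 = "lm z"
  have "T z ?y0 = (\<Sum>y\<in>UNIV. z y * T (basisv y) ?y0)" by (rule lin_expand[OF red_lin[OF R]])
  also have "\<dots> = (\<Sum>y\<in>UNIV. if y = ?y0 then z ?y0 else 0)"
  proof (rule sum.cong)
    fix y assume "y \<in> (UNIV::'a set)"
    show "z y * T (basisv y) ?y0 = (if y = ?y0 then z ?y0 else 0)"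
    proof (cases "y = ?y0")
      case True
      then show ?thesis using inn by (simp add: nf_def basisv_def)
    next
      case False
      show ?thesis
      proof (cases "z y = 0")
        case True then show ?thesis using False by simp
      next
        case zy: False
        hence "y \<le> ?y0" by (intro le_lm) (simp add: supp_def)
        hence "T (basisv y) ?y0 = 0" using red_basis[OF R, of y ?y0] False by force
        then show ?thesis using False by simp
      qed
    qed
  qed simp
  also have "\<dots> = z ?y0" by simp
  finally have "z ?y0 = 0" using z0 by simp
  moreover have "z ?y0 \<noteq> 0" using lm_in_supp[OF nz] by (simp add: supp_def)
  ultimately show False by simp
qed

lemma red_fixed_supp:
  assumes R: "reduction_operator T" and fx: "T x = x"
  shows "supp x \<subseteq> nf T"
proof (rule ccontr)
  assume "\<not> supp x \<subseteq> nf T"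
  hence ne: "supp x - nf T \<noteq> {}" by auto
  define y1 where "y1 = Max (supp x - nf T)"
  have y1in: "y1 \<in> supp x - nf T" unfolding y1_def by (rule Max_in) (use ne in auto)
  have y1max: "\<And>y. y \<in> supp x - nf T \<Longrightarrow> y \<le> y1" unfolding y1_def by (rule Max_ge) auto
  have "T x y1 = (\<Sum>y\<in>UNIV. x y * T (basisv y) y1)" by (rule lin_expand[OF red_lin[OF R]])
  also have "\<dots> = 0"
  proof (intro sum.neutral ballI)
    fix y assume "y \<in> (UNIV::'a set)"
    show "x y * T (basisv y) y1 = 0"
    proof (rule ccontr)
      assume "x y * T (basisv y) y1 \<noteq> 0"
      hence a: "x y \<noteq> 0" and b: "T (basisv y) y1 \<noteq> 0" by auto
      from red_basis[OF R b] show False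
      proof
        assume "y \<in> nf T \<and> y1 = y" thus False using y1in by auto
      next
        assume "y \<notin> nf T \<and> y1 < y"
        moreover hence "y \<le> y1" using a by (intro y1max) (simp add: supp_def)
        ultimately show False using leD by blast
      qed
    qed
  qed
  finally have "x y1 = 0" using fx by simp
  thus False using y1in by (simp add: supp_def)
qed

lemma supp_diff: "supp (a - b :: 'y \<Rightarrow> 'k::field) \<subseteq> supp a \<union> supp b"
  unfolding supp_def by auto

lemma red_zero_crit:
  assumes R: "reduction_operator T" and R': "reduction_operator T'"
    and "T z = 0" and "T' z = 0" and "supp z \<subseteq> nf T \<union> nf T'"
  shows "z = 0"
proof (rule ccontr)
  assume nz: "z \<noteq> 0"
  have "lm z \<notin> nf T" "lm z \<notin> nf T'" using red_kernel_lm[OF R assms(3) nz] red_kernel_lm[OF R' assms(4) nz] .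
  moreover have "lm z \<in> supp z" by (rule lm_in_supp[OF nz])
  ultimately show False using assms(5) by auto
qed

lemma red_fixed_transfer:
  assumes T: "reduction_operator T" and R: "reduction_operator R"
    and ker: "kern R \<subseteq> kern T" and fx: "T x = x"
  shows "R x = x"
proof -
  let ?z = "x - R x"
  have Rz: "R ?z = 0" using lin_diff[OF red_lin[OF R]] red_idem[OF R] by simp
  hence Tz: "T ?z = 0" using ker by (auto simp: kern_def)
  have "supp ?z \<subseteq> nf T \<union> nf R"
    using supp_diff[of x "R x"] red_fixed_supp[OF T fx] red_fixed_supp[OF R red_idem[OF R]] by auto
  hence "?z = 0" using red_zero_crit[OF T R Tz Rz] by blast
  thus ?thesis by simp
qed

lemma red_unique:
  assumes T: "reduction_operator T" and T': "reduction_operator T'" and ker: "kern T = kern T'"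
  shows "T = T'"
proof
  fix w
  let ?d = "T w - T' w"
  have a: "T (T w - w) = 0" using lin_diff[OF red_lin[OF T]] red_idem[OF T] by simp
  have b: "T' (T' w - w) = 0" using lin_diff[OF red_lin[OF T']] red_idem[OF T'] by simp
  hence b': "T (T' w - w) = 0" using ker by (auto simp: kern_def)
  from a ker have a': "T' (T w - w) = 0" by (auto simp: kern_def)
  have eq: "?d = (T w - w) - (T' w - w)" by simp
  have d1: "T ?d = 0"
  proof -
    have "T ?d = T (T w - w) - T (T' w - w)" using eq lin_diff[OF red_lin[OF T]] by metis
    thus ?thesis using a b' by simp
  qed
  have d2: "T' ?d = 0"
  proof -
    have "T' ?d = T' (T w - w) - T' (T' w - w)" using eq lin_diff[OF red_lin[OF T']] by metis
    thus ?thesis using a' b by simp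
  qed
  have "supp ?d \<subseteq> nf T \<union> nf T'"
    using supp_diff[of "T w" "T' w"] red_fixed_supp[OF T red_idem[OF T, of w]] red_fixed_supp[OF T' red_idem[OF T', of w]] by auto
  hence "?d = 0" using red_zero_crit[OF T T' d1 d2] by blast
  thus "T w = T' w" by simp
qed


lemma sub_zero: "is_subspace U \<Longrightarrow> 0 \<in> U"
  unfolding is_subspace_def by blast
lemma sub_add: "is_subspace U \<Longrightarrow> v \<in> U \<Longrightarrow> w \<in> U \<Longrightarrow> v + w \<in> U"
  unfolding is_subspace_def by blast
lemma sub_smult: "is_subspace U \<Longrightarrow> v \<in> U \<Longrightarrow> (\<lambda>y. c * v y) \<in> U"
  unfolding is_subspace_def by blast
lemma sub_diff:
  assumes "is_subspace U" "v \<in> U" "w \<in> U" shows "v - w \<in> U"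
proof -
  have "(\<lambda>y. (-1) * w y) \<in> U" by (rule sub_smult[OF assms(1,3)])
  hence "v + (\<lambda>y. (-1) * w y) \<in> U" by (rule sub_add[OF assms(1,2)])
  moreover have "v + (\<lambda>y. (-1) * w y) = v - w" by (simp add: fun_eq_iff)
  ultimately show ?thesis by simp
qed

lemma red_exists:
  fixes U :: "('y::{finite,linorder} \<Rightarrow> 'k::field) set"
  assumes S: "is_subspace U"
  shows "\<exists>T. reduction_operator T \<and> kern T = U"
proof -
  define L where "L = lm ` (U - {0})"
  define N where "N = - L"
  define dn where "dn S = {z. \<exists>z'\<in>S. z \<le> z'}" for S :: "'y set"
  have ex: "\<exists>r. supp r \<subseteq> N \<and> v - r \<in> U \<and> supp r \<subseteq> dn (supp v)" for v
  proof (induction v rule: measure_induct_rule[where f="\<lambda>v. card (dn (supp v \<inter> L))"])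
    case (less v)
    show ?case
    proof (cases "supp v \<inter> L = {}")
      case True
      show ?thesis
        by (rule exI[of _ v]) (use True sub_zero[OF S] in \<open>auto simp: N_def dn_def zero_fun_def\<close>)
    next
      case False
      define y where "y = Max (supp v \<inter> L)"
      have yin: "y \<in> supp v \<inter> L" unfolding y_def by (rule Max_in) (use False in auto)
      have ymax: "\<And>z. z \<in> supp v \<inter> L \<Longrightarrow> z \<le> y" unfolding y_def by (rule Max_ge) auto
      obtain u where u: "u \<in> U" "u \<noteq> 0" "lm u = y" using yin unfolding L_def by auto
      have uy: "u y \<noteq> 0" using lm_in_supp[OF u(2)] u(3) by (simp add: supp_def)
      have usupp: "\<And>z. z \<in> supp u \<Longrightarrow> z \<le> y" using le_lm u(3) by metis
      define c where "c = v y / u y"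
      define v' where "v' = v - (\<lambda>z. c * u z)"
      have v'y: "v' y = 0" unfolding v'_def c_def using uy by simp
      have sv': "supp v' \<subseteq> supp v \<union> supp u" unfolding v'_def supp_def by auto
      have low: "supp v' \<inter> L \<subseteq> {z. z < y}"
      proof
        fix z assume z: "z \<in> supp v' \<inter> L"
        hence zy: "z \<noteq> y" using v'y by (auto simp: supp_def)
        have "z \<le> y" using z sv' ymax usupp by blast
        thus "z \<in> {z. z < y}" using zy by simp
      qed
      have A: "dn (supp v' \<inter> L) \<subseteq> {z. z < y}" using low by (auto simp: dn_def)
      have B: "{z. z < y} \<subset> dn (supp v \<inter> L)"
      proof
        show "{z. z < y} \<subseteq> dn (supp v \<inter> L)" using yin by (auto simp: dn_def intro: less_imp_le)
        show "{z. z < y} \<noteq> dn (supp v \<inter> L)" using yin by (auto simp: dn_def)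
      qed
      have "card (dn (supp v' \<inter> L)) \<le> card {z. z < y}" by (rule card_mono[OF _ A]) simp
      also have "\<dots> < card (dn (supp v \<inter> L))" by (rule psubset_card_mono[OF _ B]) simp
      finally obtain r where r: "supp r \<subseteq> N" "v' - r \<in> U" "supp r \<subseteq> dn (supp v')"
        using less.IH by blast
      show ?thesis
      proof (intro exI conjI)
        show "supp r \<subseteq> N" by (rule r(1))
        have eq: "v - r = (v' - r) + (\<lambda>z. c * u z)" unfolding v'_def by simp
        show "v - r \<in> U" unfolding eq by (rule sub_add[OF S r(2) sub_smult[OF S u(1)]])
        show "supp r \<subseteq> dn (supp v)"
        proof
          fix z assume "z \<in> supp r"
          then obtain z' where z': "z' \<in> supp v'" "z \<le> z'" using r(3) by (auto simp: dn_def)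
          show "z \<in> dn (supp v)"
          proof (cases "z' \<in> supp v")
            case True thus ?thesis using z' by (auto simp: dn_def)
          next
            case False
            hence "z' \<in> supp u" using z' sv' by auto
            hence "z \<le> y" using usupp z' order_trans by blast
            thus ?thesis using yin by (auto simp: dn_def)
          qed
        qed
      qed
    qed
  qed
  define R where "R v = (SOME r. supp r \<subseteq> N \<and> v - r \<in> U \<and> supp r \<subseteq> dn (supp v))" for v
  have R1: "supp (R v) \<subseteq> N \<and> v - R v \<in> U \<and> supp (R v) \<subseteq> dn (supp v)" for v
    unfolding R_def by (rule someI_ex[OF ex])
  have uniq: "r = r'" if "supp r \<subseteq> N" "supp r' \<subseteq> N" "r - r' \<in> U" for r r'
  proof (rule ccontr)
    assume "r \<noteq> r'"
    hence nz: "r - r' \<noteq> 0" by simp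
    hence "lm (r - r') \<in> L" using that(3) unfolding L_def by auto
    moreover have "lm (r - r') \<in> supp r \<union> supp r'" using lm_in_supp[OF nz] supp_diff[of r r'] by blast
    ultimately show False using that(1,2) unfolding N_def by auto
  qed
  have char: "R v = r" if "supp r \<subseteq> N" "v - r \<in> U" for v r
  proof (rule uniq)
    show "supp (R v) \<subseteq> N" using R1 by blast
    show "supp r \<subseteq> N" by fact
    have eq: "R v - r = (v - r) - (v - R v)" by simp
    show "R v - r \<in> U" unfolding eq by (rule sub_diff[OF S that(2)]) (use R1 in blast)
  qed
  have supp_add: "supp (a + b) \<subseteq> supp a \<union> supp b" for a b :: "'y \<Rightarrow> 'k"
    unfolding supp_def by auto
  have lin: "is_linear R"
    unfolding is_linear_def
  proof (intro conjI allI)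
    fix v w
    show "R (v + w) = R v + R w"
    proof (rule char)
      show "supp (R v + R w) \<subseteq> N" using supp_add[of "R v" "R w"] R1 by blast
      have eq: "v + w - (R v + R w) = (v - R v) + (w - R w)" by simp
      show "v + w - (R v + R w) \<in> U" unfolding eq by (rule sub_add[OF S]) (use R1 in blast)+
    qed
  next
    fix c v
    show "R (\<lambda>y. c * v y) = (\<lambda>y. c * R v y)"
    proof (rule char)
      have "supp (\<lambda>y. c * R v y) \<subseteq> supp (R v)" unfolding supp_def by auto
      thus "supp (\<lambda>y. c * R v y) \<subseteq> N" using R1 by blast
      have eq: "(\<lambda>y. c * v y) - (\<lambda>y. c * R v y) = (\<lambda>y. c * (v - R v) y)"
        by (simp add: fun_eq_iff algebra_simps)
      show "(\<lambda>y. c * v y) - (\<lambda>y. c * R v y) \<in> U" unfolding eq by (rule sub_smult[OF S]) (use R1 in blast)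
    qed
  qed
  have idem: "R \<circ> R = R"
  proof
    fix v show "(R \<circ> R) v = R v" using char[of "R v" "R v"] R1 sub_zero[OF S] by simp
  qed
  have bas: "R (basisv y) = basisv y \<or> vless (R (basisv y)) (basisv y)" for y
  proof (cases "y \<in> N")
    case True
    hence "R (basisv y) = basisv y" using char[of "basisv y" "basisv y"] sub_zero[OF S]
      by (simp add: supp_basisv)
    thus ?thesis ..
  next
    case False
    let ?r = "R (basisv y)"
    have lt: "supp ?r \<subseteq> {z. z < y}"
    proof
      fix z assume z: "z \<in> supp ?r"
      hence "z \<le> y" using R1[of "basisv y"] by (auto simp: dn_def supp_basisv)
      moreover have "z \<noteq> y" using z R1[of "basisv y"] False by auto
      ultimately show "z \<in> {z. z < y}" by simp
    qed
    have "vless ?r (basisv y)"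
    proof (cases "?r = 0")
      case True thus ?thesis by (simp add: vless_def)
    next
      case False
      hence "lm ?r < y" using lm_in_supp[OF False] lt by auto
      thus ?thesis using False basisv_nz by (simp add: vless_def lm_basisv)
    qed
    thus ?thesis ..
  qed
  have ker: "kern R = U"
  proof
    show "kern R \<subseteq> U"
    proof
      fix v assume "v \<in> kern R"
      hence "R v = 0" by (simp add: kern_def)
      thus "v \<in> U" using R1[of v] by simp
    qed
    show "U \<subseteq> kern R"
    proof
      fix v assume "v \<in> U"
      hence "R v = 0" by (intro char) (auto simp: supp_def)
      thus "v \<in> kern R" by (simp add: kern_def)
    qed
  qed
  show ?thesis using lin idem bas ker unfolding reduction_operator_def by blast
qed


lemma alt_left: "alt t s (Suc n) = (if even n then s else t) \<circ> alt t s n"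
proof (induction n arbitrary: t s)
  case 0 then show ?case by simp
next
  case (Suc n)
  have "alt t s (Suc (Suc n)) = alt s t (Suc n) \<circ> s" by (simp only: alt.simps(2))
  also have "\<dots> = ((if even n then t else s) \<circ> alt s t n) \<circ> s" by (simp only: Suc.IH[of s t])
  also have "\<dots> = (if even (Suc n) then s else t) \<circ> alt t s (Suc n)" by (simp add: comp_assoc)
  finally show ?case .
qed

lemma alt_zero: "A 0 = 0 \<Longrightarrow> B 0 = 0 \<Longrightarrow> alt A B n 0 = 0"
  by (induction n arbitrary: A B) auto

lemma theta_inv_prop:
  fixes U :: "('y::{finite,linorder} \<Rightarrow> 'k::field) set"
  assumes "is_subspace U"
  shows "reduction_operator (theta_inv U) \<and> kern (theta_inv U) = U"
proof -
  have "\<exists>!T. reduction_operator T \<and> kern T = U"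
    using red_exists[OF assms] red_unique by metis
  thus ?thesis unfolding theta_inv_def by (rule theI')
qed

lemma kern_subspace:
  assumes "is_linear A" "is_linear B"
  shows "is_subspace (kern A \<inter> kern B)"
  unfolding is_subspace_def kern_def
  using assms lin_zero[OF assms(1), unfolded zero_fun_def] lin_zero[OF assms(2), unfolded zero_fun_def]
  by (auto simp: lin_add lin_smult zero_fun_def)

lemma oddI_eq: "oddI k = (\<lambda>m. 2*m+1) ` {..<k div 2}"
proof (rule set_eqI)
  fix n
  show "n \<in> oddI k \<longleftrightarrow> n \<in> (\<lambda>m. 2*m+1) ` {..<k div 2}"
  proof
    assume "n \<in> oddI k"
    hence "odd n" "n + 1 \<le> k" by (auto simp: oddI_def)
    then obtain m where "n = 2*m+1" by (metis oddE)
    moreover have "m < k div 2" using \<open>n + 1 \<le> k\<close> \<open>n = 2*m+1\<close> by linarith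
    ultimately show "n \<in> (\<lambda>m. 2*m+1) ` {..<k div 2}" by auto
  next
    assume "n \<in> (\<lambda>m. 2*m+1) ` {..<k div 2}"
    then obtain m where "n = 2*m+1" "m < k div 2" by auto
    thus "n \<in> oddI k" by (auto simp: oddI_def)
  qed
qed

lemma main_gamma:
  fixes A B :: "('y::{finite,linorder} \<Rightarrow> 'k::field) \<Rightarrow> ('y \<Rightarrow> 'k)"
  assumes RA: "reduction_operator A" and RB: "reduction_operator B"
    and k1: "k \<ge> 1" and conf: "alt A B k = alt B A k" and w0: "A w = 0"
  shows "(let u = (\<Sum>i\<in>oddI k. alt A B i w) in u - A u) = theta_inv (kern A \<inter> kern B) w"
proof -
  have LA: "is_linear A" and LB: "is_linear B" using RA RB by (auto intro: red_lin)
  define a where "a n = alt A B n w" for n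
  define M where "M = k div 2"
  define u where "u = (\<Sum>i\<in>oddI k. alt A B i w)"
  have u_eq: "u = (\<Sum>m<M. a (2*m+1))"
    unfolding u_def oddI_eq M_def a_def
    by (subst sum.reindex) (auto simp: inj_on_def)
  have aS: "a (Suc n) = (if even n then B else A) (a n)" for n
    unfolding a_def alt_left by simp
  have a3: "a (2*m+3) = B (A (a (2*m+1)))" for m
  proof -
    have "a (2*m+3) = B (a (2*m+2))" using aS[of "2*m+2"] by (simp add: numeral_3_eq_3)
    also have "a (2*m+2) = A (a (2*m+1))" using aS[of "2*m+1"] by simp
    finally show ?thesis .
  qed
  have aB: "B (a (2*m+1)) = a (2*m+1)" for m
    using aS[of "2*m"] red_idem[OF RB] by simp
  have Bu: "B u = u" unfolding u_eq lin_sum[OF LB] using aB by simp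
  have BAu: "B (A u) = (\<Sum>m<M. a (2*(Suc m)+1))"
  proof -
    have "B (A u) = B (\<Sum>m<M. A (a (2*m+1)))" unfolding u_eq by (subst lin_sum[OF LA]) (rule refl)
    also have "\<dots> = (\<Sum>m<M. B (A (a (2*m+1))))" by (rule lin_sum[OF LB])
    also have "\<dots> = (\<Sum>m<M. a (2*(Suc m)+1))" using a3 by (simp add: numeral_3_eq_3)
    finally show ?thesis .
  qed
  have tel: "u - B (A u) = a 1 - a (2*M+1)"
  proof -
    have "u - B (A u) = (\<Sum>m<M. a (2*m+1) - a (2*(Suc m)+1))"
      unfolding BAu unfolding u_eq by (simp only: sum_subtractf)
    also have "\<dots> = a (2*0+1) - a (2*M+1)"
      by (rule sum_lessThan_telescope'[where f="\<lambda>m. a (2*m+1)"])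
    finally show ?thesis by simp
  qed
  have ak: "a k = 0"
  proof -
    obtain n where n: "k = Suc n" using k1 by (cases k) auto
    have "a k = alt B A k w" unfolding a_def conf ..
    also have "\<dots> = alt A B n (A w)" unfolding n by simp
    also have "\<dots> = 0" unfolding w0 by (rule alt_zero[of A B, OF lin_zero[OF LA] lin_zero[OF LB]])
    finally show ?thesis .
  qed
  have aM: "a (2*M+1) = 0"
  proof (cases "even k")
    case True
    hence "2*M+1 = Suc k" unfolding M_def by simp
    thus ?thesis using aS[of k] ak lin_zero[OF LA] lin_zero[OF LB] by simp
  next
    case False
    hence "2*M+1 = k" unfolding M_def by simp
    thus ?thesis using ak by simp
  qed
  have a1: "a 1 = B w" unfolding a_def by simp
  define v where "v = u - A u"
  define U where "U = kern A \<inter> kern B"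
  define R where "R = theta_inv U"
  have SU: "is_subspace U" unfolding U_def by (rule kern_subspace[OF LA LB])
  have RR: "reduction_operator R" and kR: "kern R = U"
    using theta_inv_prop[OF SU] unfolding R_def by auto
  have LR: "is_linear R" by (rule red_lin[OF RR])
  have vwA: "A (v - w) = 0"
    unfolding v_def lin_diff[OF LA] red_idem[OF RA] w0 by simp
  have vwB: "B (v - w) = 0"
  proof -
    have "B (v - w) = (B u - B (A u)) - B w" unfolding v_def lin_diff[OF LB] ..
    also have "\<dots> = 0" using tel Bu aM a1 by simp
    finally show ?thesis .
  qed
  have vwU: "v - w \<in> U" using vwA vwB by (simp add: U_def kern_def)
  have kRA: "kern R \<subseteq> kern A" and kRB: "kern R \<subseteq> kern B" using kR U_def by auto
  have Ru: "R u = u" by (rule red_fixed_transfer[OF RB RR kRB Bu])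
  have RAu: "R (A u) = A u" by (rule red_fixed_transfer[OF RA RR kRA red_idem[OF RA]])
  have Rv: "R v = v" unfolding v_def lin_diff[OF LR] Ru RAu ..
  have Rww: "R w - w \<in> U" using kR lin_diff[OF LR] red_idem[OF RR] by (auto simp: kern_def)
  define d where "d = v - R w"
  have dU: "d \<in> U"
  proof -
    have "d = (v - w) - (R w - w)" unfolding d_def by simp
    thus ?thesis using sub_diff[OF SU vwU Rww] by simp
  qed
  have "R d = 0" using dU kR by (auto simp: kern_def)
  moreover have "R d = d" unfolding d_def lin_diff[OF LR] Rv red_idem[OF RR] ..
  ultimately have "d = 0" by simp
  hence "v = R w" unfolding d_def by simp
  thus ?thesis unfolding v_def u_def R_def U_def Let_def .
qed

theorem lemma3p2p8:
  fixes T1 T2 :: "('y::{finite,linorder} \<Rightarrow> 'k::field) \<Rightarrow> ('y \<Rightarrow> 'k)"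
    and k :: nat and W :: "('y \<Rightarrow> 'k) set" and i j :: nat
  assumes "reduction_operator T1" and "reduction_operator T2"
    and "confluent T1 T2"
    and "k \<ge> 1" and "alt T1 T2 k = alt T2 T1 k"
    and "is_subspace W"
    and "{i, j} = {1, 2}"
    and "W \<subseteq> kern (if i = 1 then T1 else T2)"
  shows "\<forall>w\<in>W. gamma_img T1 T2 k j w = join T1 T2 w"
proof
  fix w assume wW: "w \<in> W"
  have ij: "(i = 1 \<and> j = 2) \<or> (i = 2 \<and> j = 1)" using assms(7) by (auto simp: doubleton_eq_iff)
  thus "gamma_img T1 T2 k j w = join T1 T2 w"
  proof
    assume c: "i = 1 \<and> j = 2"
    hence "T1 w = 0" using assms(8) wW by (auto simp: kern_def)
    from main_gamma[OF assms(1,2,4,5) this] c show ?thesis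
      by (simp add: gamma_img_def join_def)
  next
    assume c: "i = 2 \<and> j = 1"
    hence "T2 w = 0" using assms(8) wW by (auto simp: kern_def)
    from main_gamma[OF assms(2,1,4) assms(5)[symmetric] this] c show ?thesis
      by (simp add: gamma_img_def join_def Int_commute)
  qed
qed

end
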